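(* Let $d\ge1$ and $c_0>0$. There exists $C<\infty$ (depending only on $d$ and $c_0$) such that for all $\epsilon>0$, $\theta>0$ with $\theta\epsilon^2\ge c_0$, all $t\ge0$ and all $x,y\in\mathbb R^d$, $$\big|\psi^{\epsilon,x}_t(y)-p_{\epsilon^2+t}(x,y)\big|\le\frac{C}{(\epsilon^2\theta)^{1/2}}p_{6(\epsilon^2+t)}(x,y)+\frac{C}{(\epsilon^2+t)^{d/2}}\exp(-\epsilon^2\theta/2).$$
   Context: $p_t(x,y)=(2\pi t)^{-d/2}\exp(-\|x-y\|^2/(2t))$ is the heat kernel. $q_\theta(x,dy)$ is the Gaussian distribution with mean $x$ and covariance $\theta^{-1}I$, $\mathcal L^\theta f(x)=\theta\int(f(y)-f(x))q_\theta(x,dy)$, and $\psi^{\epsilon,x}_t$ is the solution of $\partial_t\psi=\mathcal L^\theta\psi$ with $\psi_0(y)=p_{\epsilon^2}(x,y)$; equivalently $\psi^{\epsilon,x}_t(y)=\mathbb E[p_{\epsilon^2+\Pi(\theta t)/\theta}(x,y)]$ for a rate one Poisson process $\Pi$. *)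

theory Defs
  imports "HOL-Analysis.Analysis"
begin

definition heat_kernel :: "real \<Rightarrow> real^'n \<Rightarrow> real^'n \<Rightarrow> real" where
  "heat_kernel t x y =
     (2 * pi * t) powr (- real CARD('n) / 2) * exp (- (norm (x - y))\<^sup>2 / (2 * t))"

text \<open>psi^{eps,x}_t(y) = E[ p_{eps^2 + Pi(theta t)/theta}(x,y) ], where Pi(theta t) is
  Poisson distributed with mean theta t; the expectation is written out as the series
  over the Poisson weights exp(-theta t) (theta t)^k / k!.\<close>
definition psi :: "real \<Rightarrow> real \<Rightarrow> real^'n \<Rightarrow> real \<Rightarrow> real^'n \<Rightarrow> real" where
  "psi \<theta> \<epsilon> x t y =
     (\<Sum>k. exp (- \<theta> * t) * (\<theta> * t) ^ k / fact k * heat_kernel (\<epsilon>\<^sup>2 + real k / \<theta>) x y)"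

end

theory Submission
  imports Defs
begin

definition FF :: "real \<Rightarrow> real \<Rightarrow> real \<Rightarrow> real" where
  "FF d r u = (2 * pi * u) powr (-d/2) * exp(-r/(2 * u))"

lemma FF_deriv: assumes u: "u > 0"
  shows "(FF d r has_real_derivative (FF d r u * (r/(2 * u^2) - d/(2 * u)))) (at u)"
proof -
  have g: "((\<lambda>u. 2 * pi * u) has_real_derivative 2 * pi) (at u)"
    using DERIV_cmult_Id[of "2 * pi" u] by simp
  have d1: "((\<lambda>u. (2 * pi * u) powr (-d/2)) has_real_derivative
      (-d/2) * (2 * pi * u) powr (-d/2 - of_nat 1) * (2 * pi)) (at u)"
    by (rule DERIV_fun_powr[OF g]) (use u in simp)
  have h: "((\<lambda>u. -r/(2 * u)) has_real_derivative r/(2 * u^2)) (at u)"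
  proof -
    have "((\<lambda>u. (-r/2) * inverse u) has_real_derivative (-r/2) * (- (inverse u ^ Suc (Suc 0)))) (at u)"
      by (rule DERIV_cmult, rule DERIV_inverse) (use u in simp)
    moreover have "(\<lambda>u. (-r/2) * inverse u) = (\<lambda>u. -r/(2 * u))" by (auto simp: field_simps)
    ultimately show ?thesis by (simp add: field_simps power2_eq_square)
  qed
  have d2: "((\<lambda>u. exp(-r/(2 * u))) has_real_derivative exp(-r/(2 * u)) * (r/(2 * u^2))) (at u)"
    by (rule DERIV_chain2[OF DERIV_exp h])
  have D: "(FF d r has_real_derivative
      ((-d/2) * (2 * pi * u) powr (-d/2 - of_nat 1) * (2 * pi)) * exp(-r/(2 * u))
      + (exp(-r/(2 * u)) * (r/(2 * u^2))) * (2 * pi * u) powr (-d/2)) (at u)"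
    unfolding FF_def[abs_def] by (rule DERIV_mult[OF d1 d2])
  have pw: "(2 * pi * u) powr (-d/2 - of_nat 1) = (2 * pi * u) powr (-d/2) / (2 * pi * u)"
    using u by (simp add: powr_diff)
  define P where "P = (2 * pi * u) powr (-d/2)"
  define E where "E = exp(-r/(2 * u))"
  have eq: "((-d/2) * (P / (2 * pi * u)) * (2 * pi)) * E + (E * (r/(2 * u^2))) * P
      = P * E * (r/(2 * u^2) - d/(2 * u))"
    using u by (simp add: field_simps power2_eq_square)
  show ?thesis
    using D unfolding pw P_def[symmetric] E_def[symmetric] eq
    by (simp add: FF_def P_def E_def)
qed

lemma two_y_exp: assumes "(y::real) \<ge> 0" shows "2 * y * exp(-2 * y) \<le> exp(-y)"
proof -
  have "(1 + y/2)^2 \<le> exp(y/2)^2"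
    using assms by (intro power_mono) (auto intro: order_trans[OF _ exp_ge_add_one_self])
  also have "exp(y/2)^2 = exp y" by (simp add: power2_eq_square flip: exp_add)
  finally have h: "(1 + y/2)^2 \<le> exp y" .
  have "(1 + y/2)^2 - 2 * y = (1 - y/2)^2" by (simp add: power2_eq_square algebra_simps)
  hence "2 * y \<le> exp y" using h zero_le_power2[of "1 - y/2"] by linarith
  hence "2 * y * exp(-2 * y) \<le> exp y * exp(-2 * y)" by (intro mult_right_mono) auto
  also have "\<dots> = exp(-y)" by (simp flip: exp_add)
  finally show ?thesis .
qed

lemma divc: assumes "(X::real) > 0" "c > 0" shows "(X / c) powr (-d/2) = c powr (d/2) * X powr (-d/2)"
proof -
  have "(X / c) powr (-d/2) = X powr (-d/2) / c powr (-d/2)" using assms by (simp add: powr_divide)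
  also have "\<dots> = c powr (d/2) * X powr (-d/2)" using assms by (simp add: powr_minus field_simps)
  finally show ?thesis .
qed

lemma div60: assumes "(X::real) > 0" shows "(X / 60) powr (-d/2) = 60 powr (d/2) * X powr (-d/2)"
  using divc[OF assms, of 60] by simp

lemma FF_deriv_bound:
  fixes d r s v :: real
  assumes d: "d \<ge> 0" and r: "r \<ge> 0" and s: "s > 0" and v1: "s/10 \<le> v" and v2: "v \<le> 3 * s"
  shows "\<bar>FF d r v * (r/(2 * v^2) - d/(2 * v))\<bar> \<le> 10 * 60 powr (d/2) * (d/2+1) / s * FF d r (6 * s)"
proof -
  have v: "v > 0" using s v1 by linarith
  define P where "P = (2 * pi * v) powr (-d/2)"
  have P0: "P \<ge> 0" unfolding P_def by simp
  have e1: "r/(2 * v) * exp(-r/(2 * v)) \<le> exp(-r/(4 * v))"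
    using two_y_exp[of "r/(4 * v)"] r v by (simp add: field_simps)
  have e2: "exp(-r/(2 * v)) \<le> exp(-r/(4 * v))" using r v by (simp add: field_simps)
  have e3: "exp(-r/(4 * v)) \<le> exp(-r/(12 * s))" using r v v2 s
    by (simp add: field_simps mult_left_mono)
  have "\<bar>FF d r v * (r/(2 * v^2) - d/(2 * v))\<bar> \<le> P * exp(-r/(2 * v)) * (r/(2 * v^2) + d/(2 * v))"
  proof -
    have "0 \<le> r/(2 * v^2)" "0 \<le> d/(2 * v)" using r d v by auto
    hence "\<bar>r/(2 * v^2) - d/(2 * v)\<bar> \<le> r/(2 * v^2) + d/(2 * v)" by linarith
    thus ?thesis unfolding FF_def P_def by (simp add: abs_mult mult_left_mono)
  qed
  also have "\<dots> = P / v * (r/(2 * v) * exp(-r/(2 * v)) + d/2 * exp(-r/(2 * v)))"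
    using v by (simp add: field_simps power2_eq_square)
  also have "\<dots> \<le> P / v * (exp(-r/(4 * v)) + d/2 * exp(-r/(4 * v)))"
    by (rule mult_left_mono[OF add_mono[OF e1 mult_left_mono[OF e2]]]) (use P0 v d in auto)
  also have "\<dots> = P / v * (d/2+1) * exp(-r/(4 * v))" by (simp add: algebra_simps)
  also have "\<dots> \<le> P / v * (d/2+1) * exp(-r/(12 * s))"
    by (rule mult_left_mono[OF e3]) (use P0 v d in auto)
  also have "\<dots> \<le> (60 powr (d/2) * (12 * pi * s) powr (-d/2)) * (10/s) * (d/2+1) * exp(-r/(12 * s))"
  proof -
    have "P \<le> (2 * pi * (s/10)) powr (-d/2)" unfolding P_def
      using v1 s d by (intro powr_mono2') auto
    also have "(2 * pi * (s/10)) = (12 * pi * s) / 60" by simp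
    also have "((12 * pi * s) / 60) powr (-d/2) = 60 powr (d/2) * (12 * pi * s) powr (-d/2)"
      using s div60[of "12 * pi * s" d] by simp
    finally have Pb: "P \<le> 60 powr (d/2) * (12 * pi * s) powr (-d/2)" .
    have vb: "1/v \<le> 10/s" using v1 s v by (simp add: field_simps)
    have h: "P / v \<le> (60 powr (d/2) * (12 * pi * s) powr (-d/2)) * (10/s)"
      using mult_mono[OF Pb vb] P0 v s by simp
    have h2: "P / v * (d/2+1) \<le> (60 powr (d/2) * (12 * pi * s) powr (-d/2)) * (10/s) * (d/2+1)"
      by (rule mult_right_mono[OF h]) (use d in simp)
    show ?thesis by (rule mult_right_mono[OF h2]) simp
  qed
  also have "\<dots> = 10 * 60 powr (d/2) * (d/2+1) / s * FF d r (6 * s)"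
    unfolding FF_def by (simp add: field_simps)
  finally show ?thesis .
qed
lemma FF_nonneg: "FF d r u \<ge> 0" unfolding FF_def by simp

lemma FF_le: assumes "r \<ge> 0" "u > 0" shows "FF d r u \<le> (2 * pi * u) powr (-d/2)"
  unfolding FF_def using assms by (intro mult_left_le) (auto simp: field_simps)

lemma FF_6: assumes "r \<ge> 0" "s > 0" shows "FF d r s \<le> 6 powr (d/2) * FF d r (6 * s)"
proof -
  have e: "2 * pi * s = (12 * pi * s) / 6" by simp
  have 1: "(2 * pi * s) powr (-d/2) = 6 powr (d/2) * (12 * pi * s) powr (-d/2)"
    by (subst e) (rule divc, use assms in auto)
  have 2: "exp(-r/(2 * s)) \<le> exp(-r/(12 * s))" using assms by (simp add: field_simps)
  have 3: "FF d r (6 * s) = (12 * pi * s) powr (-d/2) * exp(-r/(12 * s))"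
    unfolding FF_def by (simp add: mult_ac)
  have "FF d r s = 6 powr (d/2) * (12 * pi * s) powr (-d/2) * exp(-r/(2 * s))"
    unfolding FF_def 1 ..
  also have "\<dots> \<le> 6 powr (d/2) * (12 * pi * s) powr (-d/2) * exp(-r/(12 * s))"
    by (rule mult_left_mono[OF 2]) simp
  finally show ?thesis unfolding 3 by (simp add: mult_ac)
qed

definition K1 :: "real \<Rightarrow> real" where "K1 d = 20 * 60 powr (d/2) * (d+1)"

lemma FF_mvt:
  fixes d r s u :: real
  assumes d: "d \<ge> 0" and r: "r \<ge> 0" and s: "s > 0" and u1: "s/10 \<le> u" and u2: "u \<le> 3 * s"
  shows "\<bar>FF d r u - FF d r s\<bar> \<le> K1 d * \<bar>u - s\<bar> / s * FF d r (6 * s)"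
proof -
  define M where "M = 10 * 60 powr (d/2) * (d/2+1) / s * FF d r (6 * s)"
  have MK: "M \<le> K1 d / s * FF d r (6 * s)" unfolding M_def K1_def using s d
    by (intro mult_right_mono divide_right_mono FF_nonneg) auto
  have key: "\<bar>FF d r b - FF d r a\<bar> \<le> (b - a) * M" if ab: "a < b" "s/10 \<le> a" "b \<le> 3 * s" for a b
  proof -
    have "\<exists>z. a < z \<and> z < b \<and> FF d r b - FF d r a = (b - a) * (FF d r z * (r/(2 * z^2) - d/(2 * z)))"
      using ab s by (intro MVT2 FF_deriv) auto
    then obtain z where z: "a < z" "z < b" "FF d r b - FF d r a = (b - a) * (FF d r z * (r/(2 * z^2) - d/(2 * z)))" by blast
    have "\<bar>FF d r z * (r/(2 * z^2) - d/(2 * z))\<bar> \<le> M" unfolding M_def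
      using z ab by (intro FF_deriv_bound d r s) auto
    thus ?thesis unfolding z(3) abs_mult using ab by (simp add: mult_left_mono)
  qed
  have "\<bar>FF d r u - FF d r s\<bar> \<le> \<bar>u - s\<bar> * M"
  proof (cases u s rule: linorder_cases)
    case less thus ?thesis using key[of u s] u1 s by (simp add: abs_minus_commute)
  next
    case greater thus ?thesis using key[of s u] u2 s by simp
  qed simp
  also have "\<dots> \<le> \<bar>u - s\<bar> * (K1 d / s * FF d r (6 * s))" by (rule mult_left_mono[OF MK]) simp
  finally show ?thesis by (simp add: mult_ac)
qed

lemma FF_point:
  fixes d r a s u \<theta> :: real
  assumes d: "d \<ge> 0" and r: "r \<ge> 0" and a: "a > 0" "a \<le> s" "a \<le> u" and th: "\<theta> > 0"
  shows "\<bar>FF d r u - FF d r s\<bar> \<le> K1 d * \<bar>u - s\<bar> / s * FF d r (6 * s)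
     + (2 * pi * a) powr (-d/2) * exp(2 * \<theta> * (s/10 - u)) + (6 * pi * s) powr (-d/2) * exp(\<theta> * (u - 3 * s))"
proof -
  have s: "s > 0" using a by linarith
  have u: "u > 0" using a by linarith
  have T2: "0 \<le> (2 * pi * a) powr (-d/2) * exp(2 * \<theta> * (s/10 - u))" by simp
  have T3: "0 \<le> (6 * pi * s) powr (-d/2) * exp(\<theta> * (u - 3 * s))" by simp
  have F6: "FF d r s \<le> 6 powr (d/2) * FF d r (6 * s)" using FF_6 r s by blast
  have K6: "20 * 6 powr (d/2) \<le> K1 d"
  proof -
    have "6 powr (d/2) \<le> 60 powr (d/2)" using d by (intro powr_mono2) auto
    also have "\<dots> \<le> 60 powr (d/2) * (d+1)" using d by (simp add: mult_le_cancel_left1)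
    finally show ?thesis unfolding K1_def by simp
  qed
  have Fs: "FF d r s \<le> K1 d * \<bar>u - s\<bar> / s * FF d r (6 * s)" if "\<bar>u - s\<bar> / s \<ge> 1/20"
  proof -
    have "FF d r s \<le> 6 powr (d/2) * FF d r (6 * s)" by (rule F6)
    also have "\<dots> \<le> (K1 d * \<bar>u - s\<bar> / s) * FF d r (6 * s)"
    proof (intro mult_right_mono FF_nonneg)
      have "6 powr (d/2) = 20 * 6 powr (d/2) * (1/20)" by simp
      also have "\<dots> \<le> K1 d * (\<bar>u - s\<bar> / s)" by (rule mult_mono[OF K6 that]) (use d in \<open>auto simp: K1_def\<close>)
      finally show "6 powr (d/2) \<le> K1 d * \<bar>u - s\<bar> / s" by simp
    qed
    finally show ?thesis by simp
  qed
  show ?thesis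
  proof (cases "u < s/10")
    case True
    have "\<bar>u - s\<bar> \<ge> s/20" using True s by linarith
    hence "\<bar>u - s\<bar> / s \<ge> 1/20" using s by (simp add: le_divide_eq)
    hence 1: "FF d r s \<le> K1 d * \<bar>u - s\<bar> / s * FF d r (6 * s)" by (rule Fs)
    have "FF d r u \<le> (2 * pi * u) powr (-d/2)" using FF_le r u by blast
    also have "\<dots> \<le> (2 * pi * a) powr (-d/2)" using a d by (intro powr_mono2') auto
    also have "\<dots> \<le> (2 * pi * a) powr (-d/2) * exp(2 * \<theta> * (s/10 - u))"
    proof -
      have "1 \<le> exp(2 * \<theta> * (s/10 - u))" using True th by simp
      thus ?thesis by (simp add: mult_le_cancel_left1)
    qed
    finally have 2: "FF d r u \<le> (2 * pi * a) powr (-d/2) * exp(2 * \<theta> * (s/10 - u))" .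
    have "\<bar>FF d r u - FF d r s\<bar> \<le> FF d r u + FF d r s" using FF_nonneg[of d r u] FF_nonneg[of d r s] by linarith
    thus ?thesis using 1 2 T3 by linarith
  next
    case False
    show ?thesis
    proof (cases "u > 3 * s")
      case True
      have "\<bar>u - s\<bar> \<ge> s/20" using True s by linarith
    hence "\<bar>u - s\<bar> / s \<ge> 1/20" using s by (simp add: le_divide_eq)
      hence 1: "FF d r s \<le> K1 d * \<bar>u - s\<bar> / s * FF d r (6 * s)" by (rule Fs)
      have "FF d r u \<le> (2 * pi * u) powr (-d/2)" using FF_le r u by blast
      also have "\<dots> \<le> (6 * pi * s) powr (-d/2)" using True s d by (intro powr_mono2') auto
      also have "\<dots> \<le> (6 * pi * s) powr (-d/2) * exp(\<theta> * (u - 3 * s))"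
      proof -
        have "1 \<le> exp(\<theta> * (u - 3 * s))" using True th by simp
        thus ?thesis by (simp add: mult_le_cancel_left1)
      qed
      finally have 2: "FF d r u \<le> (6 * pi * s) powr (-d/2) * exp(\<theta> * (u - 3 * s))" .
      have "\<bar>FF d r u - FF d r s\<bar> \<le> FF d r u + FF d r s" using FF_nonneg[of d r u] FF_nonneg[of d r s] by linarith
      thus ?thesis using 1 2 T2 by linarith
    next
      case False2: False
      have "\<bar>FF d r u - FF d r s\<bar> \<le> K1 d * \<bar>u - s\<bar> / s * FF d r (6 * s)"
        using False False2 by (intro FF_mvt d r s) auto
      thus ?thesis using T2 T3 by linarith
    qed
  qed
qed



definition w :: "real \<Rightarrow> nat \<Rightarrow> real" where "w \<mu> k = exp(-\<mu>) * \<mu>^k / fact k"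

lemma w_nonneg: "\<mu> \<ge> 0 \<Longrightarrow> w \<mu> k \<ge> 0" unfolding w_def by simp

lemma S0: "(\<lambda>k. x^k / fact k) sums exp (x::real)"
  using exp_converges[of x] by (simp add: field_simps)

lemma S1: "(\<lambda>k. real k * (x^k / fact k)) sums (x * exp (x::real))"
proof -
  have "(\<lambda>n. x * (x^n / fact n)) sums (x * exp x)" by (rule sums_mult[OF S0])
  moreover have "(\<lambda>n. real (Suc n) * (x^(Suc n) / fact (Suc n))) = (\<lambda>n. x * (x^n / fact n))"
    by (auto simp: fact_Suc field_simps simp del: of_nat_Suc)
  ultimately have "(\<lambda>n. real (Suc n) * (x^(Suc n) / fact (Suc n))) sums (x * exp x)" by simp
  thus ?thesis by (subst (asm) sums_Suc_iff) simp
qed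

lemma S2: "(\<lambda>k. (real k)^2 * (x^k / fact k)) sums ((x^2 + x) * exp (x::real))"
proof -
  have "(\<lambda>n. x * (real n * (x^n / fact n) + x^n / fact n)) sums (x * (x * exp x + exp x))"
    by (rule sums_mult[OF sums_add[OF S1 S0]])
  moreover have "(\<lambda>n. (real (Suc n))^2 * (x^(Suc n) / fact (Suc n))) = (\<lambda>n. x * (real n * (x^n / fact n) + x^n / fact n))"
    apply (rule ext) apply (simp add: fact_Suc field_simps power2_eq_square del: of_nat_Suc)
    apply (simp add: algebra_simps)
    done
  ultimately have "(\<lambda>n. (real (Suc n))^2 * (x^(Suc n) / fact (Suc n))) sums ((x^2 + x) * exp x)"
    by (simp add: algebra_simps power2_eq_square)
  thus ?thesis by (subst (asm) sums_Suc_iff) simp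
qed

lemma W0: "w \<mu> sums 1"
proof -
  have "(\<lambda>k. exp(-\<mu>) * (\<mu>^k / fact k)) sums (exp(-\<mu>) * exp \<mu>)" by (rule sums_mult[OF S0])
  thus ?thesis unfolding w_def by (simp add: exp_minus field_simps)
qed

lemma W1: "(\<lambda>k. w \<mu> k * real k) sums \<mu>"
proof -
  have "(\<lambda>k. exp(-\<mu>) * (real k * (\<mu>^k / fact k))) sums (exp(-\<mu>) * (\<mu> * exp \<mu>))" by (rule sums_mult[OF S1])
  thus ?thesis unfolding w_def by (simp add: exp_minus field_simps)
qed

lemma W2: "(\<lambda>k. w \<mu> k * (real k)^2) sums (\<mu>^2 + \<mu>)"
proof -
  have "(\<lambda>k. exp(-\<mu>) * ((real k)^2 * (\<mu>^k / fact k))) sums (exp(-\<mu>) * ((\<mu>^2 + \<mu>) * exp \<mu>))" by (rule sums_mult[OF S2])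
  moreover have "exp(-\<mu>) * ((\<mu>^2 + \<mu>) * exp \<mu>) = \<mu>^2 + \<mu>" by (simp add: exp_minus)
  moreover have "(\<lambda>k. w \<mu> k * (real k)^2) = (\<lambda>k. exp(-\<mu>) * ((real k)^2 * (\<mu>^k / fact k)))"
    by (rule ext) (simp add: w_def field_simps)
  ultimately show ?thesis by simp
qed

lemma Wvar: "(\<lambda>k. w \<mu> k * (real k - \<mu>)^2) sums \<mu>"
proof -
  have "(\<lambda>k. w \<mu> k * (real k)^2 - (2 * \<mu>) * (w \<mu> k * real k) + \<mu>^2 * w \<mu> k) sums ((\<mu>^2 + \<mu>) - (2 * \<mu>) * \<mu> + \<mu>^2 * 1)"
    by (intro sums_add sums_diff sums_mult W0 W1 W2)
  thus ?thesis by (simp add: power2_eq_square algebra_simps)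
qed

lemma Wexp: "(\<lambda>k. w \<mu> k * (c * exp(b * real k))) sums (c * exp(-\<mu>) * exp(\<mu> * exp b))"
proof -
  have "(\<lambda>k. c * exp(-\<mu>) * ((\<mu> * exp b)^k / fact k)) sums (c * exp(-\<mu>) * exp(\<mu> * exp b))"
    by (rule sums_mult[OF S0])
  moreover have "\<And>k. w \<mu> k * (c * exp(b * real k)) = c * exp(-\<mu>) * ((\<mu> * exp b)^k / fact k)"
    unfolding w_def by (simp add: power_mult_distrib mult.commute[of b] exp_of_nat_mult)
  ultimately show ?thesis by simp
qed

lemma L5: assumes X: "(X::real) \<ge> 0" and d: "d \<ge> 1"
  shows "X powr (d/2) * exp(-X/10) \<le> (10 * d) powr d"
proof -
  have "X powr (d/2) \<le> (1+X) powr (d/2)" using X d by (intro powr_mono2) auto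
  also have "\<dots> \<le> (1+X) powr d" using X d by (intro powr_mono) auto
  finally have 1: "X powr (d/2) \<le> (1+X) powr d" .
  have "(1+X) powr d / (10 * d) powr d = ((1+X) / (10 * d)) powr d" using X d by (simp add: powr_divide)
  also have "\<dots> \<le> (1 + X/(10 * d)) powr d" using X d by (intro powr_mono2) (auto simp: field_simps)
  also have "\<dots> \<le> exp(X/(10 * d)) powr d" using X d by (intro powr_mono2) auto
  also have "\<dots> = exp(X/10)" using d by (simp add: powr_def)
  finally have 2: "(1+X) powr d \<le> (10 * d) powr d * exp(X/10)" using d by (simp add: field_simps)
  have "X powr (d/2) * exp(-X/10) \<le> (10 * d) powr d * exp(X/10) * exp(-X/10)"
    using 1 2 by (intro mult_right_mono) auto
  also have "\<dots> = (10 * d) powr d" by (simp flip: exp_add)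
  finally show ?thesis .
qed



definition CC :: "real \<Rightarrow> real \<Rightarrow> real" where
  "CC d c0 = K1 d + 1 + c0 powr (-d/2) * (10 * d) powr d"

lemma exp_m2: "exp(-2::real) \<le> 1/5"
proof -
  have "5 \<le> exp(2::real)" using exp_lower_Taylor_quadratic[of 2] by simp
  thus ?thesis by (simp add: exp_minus field_simps)
qed

lemma lin1: "(X::real) \<le> m * (1/5) \<Longrightarrow> 0 \<le> T \<Longrightarrow> 0 \<le> m \<Longrightarrow> S = T + m \<Longrightarrow> S/5 - 2 * T - m + X \<le> -T/2 - S/10"
  by linarith

lemma lin2: "(X::real) \<le> m * 3 \<Longrightarrow> m \<le> S \<Longrightarrow> 0 \<le> T \<Longrightarrow> 0 \<le> m \<Longrightarrow> S = T + m \<Longrightarrow> T - 3 * S - m + X \<le> -T/2"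
  by linarith

lemma main_abs:
  fixes d r a t \<theta> c0 :: real
  assumes d: "d \<ge> 1" and r: "r \<ge> 0" and a: "a > 0" and t: "t \<ge> 0" and th: "\<theta> > 0"
    and c0: "c0 > 0" and ac: "\<theta> * a \<ge> c0"
  shows "\<bar>(\<Sum>k. w (\<theta> * t) k * FF d r (a + real k / \<theta>)) - FF d r (a + t)\<bar>
    \<le> CC d c0 / sqrt (a * \<theta>) * FF d r (6 * (a + t)) + CC d c0 / (a + t) powr (d/2) * exp(- a * \<theta> / 2)"
proof -
  define s where "s = a + t"
  define \<mu> where "\<mu> = \<theta> * t"
  define \<delta> where "\<delta> = sqrt (\<theta> * s)"
  define F6 where "F6 = FF d r (6 * s)"
  define A where "A = (2 * pi * a) powr (-d/2)"
  define B where "B = (6 * pi * s) powr (-d/2)"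
  define u where "u = (\<lambda>k::nat. a + real k / \<theta>)"
  define c1 where "c1 = K1 d * F6 / (s * \<theta>) / (2 * \<delta>)"
  define c2 where "c2 = K1 d * F6 / (s * \<theta>) * \<delta> / 2"
  define cA where "cA = A * exp(2 * \<theta> * (s/10 - a))"
  define cB where "cB = B * exp(\<theta> * (a - 3 * s))"
  define g where "g = (\<lambda>k::nat. c1 * (real k - \<mu>)^2 + c2 + cA * exp((-2) * real k) + cB * exp(1 * real k))"
  define V where "V = c1 * \<mu> + c2 + cA * exp(-\<mu>) * exp(\<mu> * exp(-2)) + cB * exp(-\<mu>) * exp(\<mu> * exp 1)"
  have s: "s > 0" "a \<le> s" using a t unfolding s_def by auto
  have mu: "\<mu> \<ge> 0" unfolding \<mu>_def using th t by simp
  have ths: "\<theta> * s = \<theta> * a + \<mu>" unfolding s_def \<mu>_def by (simp add: algebra_simps)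
  have dpos: "\<delta> > 0" unfolding \<delta>_def using th s by simp
  have dsq: "\<delta>^2 = \<theta> * s" unfolding \<delta>_def using th s by simp
  have F6: "F6 \<ge> 0" unfolding F6_def by (rule FF_nonneg)
  have K1: "K1 d \<ge> 0" unfolding K1_def using d by simp
  have A0: "A \<ge> 0" "B \<ge> 0" unfolding A_def B_def by simp_all
  have pt: "\<bar>w \<mu> k * (FF d r (u k) - FF d r s)\<bar> \<le> w \<mu> k * g k" for k
  proof -
    have uk: "a \<le> u k" unfolding u_def using th by simp
    have P: "\<bar>FF d r (u k) - FF d r s\<bar> \<le> K1 d * \<bar>u k - s\<bar> / s * F6
       + A * exp(2 * \<theta> * (s/10 - u k)) + B * exp(\<theta> * (u k - 3 * s))"
      unfolding F6_def A_def B_def using FF_point[OF _ r a s(2) uk th] d by simp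
    have us: "\<bar>u k - s\<bar> = \<bar>real k - \<mu>\<bar> / \<theta>"
    proof -
      have "u k - s = (real k - \<mu>) / \<theta>" unfolding u_def s_def \<mu>_def using th by (simp add: field_simps)
      thus ?thesis using th by simp
    qed
    have amgm: "\<bar>real k - \<mu>\<bar> \<le> ((real k - \<mu>)^2 / \<delta> + \<delta>) / 2"
    proof -
      have "0 \<le> (\<bar>real k - \<mu>\<bar> - \<delta>)^2" by simp
      hence "2 * \<bar>real k - \<mu>\<bar> * \<delta> \<le> (real k - \<mu>)^2 + \<delta>^2" by (simp add: power2_eq_square algebra_simps)
      thus ?thesis using dpos by (simp add: field_simps power2_eq_square)
    qed
    have t1: "K1 d * \<bar>u k - s\<bar> / s * F6 \<le> c1 * (real k - \<mu>)^2 + c2"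
    proof -
      have "K1 d * \<bar>u k - s\<bar> / s * F6 = (K1 d * F6 / (s * \<theta>)) * \<bar>real k - \<mu>\<bar>"
        unfolding us using s th by (simp add: field_simps)
      also have "\<dots> \<le> (K1 d * F6 / (s * \<theta>)) * (((real k - \<mu>)^2 / \<delta> + \<delta>) / 2)"
        by (rule mult_left_mono[OF amgm]) (use K1 F6 s th in simp)
      also have "\<dots> = c1 * (real k - \<mu>)^2 + c2" unfolding c1_def c2_def using dpos th s by (simp add: field_simps)
      finally show ?thesis .
    qed
    have t2: "A * exp(2 * \<theta> * (s/10 - u k)) = cA * exp((-2) * real k)"
    proof -
      have e: "2 * \<theta> * (s/10 - u k) = 2 * \<theta> * (s/10 - a) + (-2) * real k"
        unfolding u_def using th by (simp add: field_simps)
      have "exp (2 * \<theta> * (s/10 - u k)) = exp (2 * \<theta> * (s/10 - a)) * exp ((-2) * real k)"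
        unfolding e by (rule exp_add)
      thus ?thesis unfolding cA_def by (simp only: mult.assoc)
    qed
    have t3: "B * exp(\<theta> * (u k - 3 * s)) = cB * exp(1 * real k)"
    proof -
      have e: "\<theta> * (u k - 3 * s) = \<theta> * (a - 3 * s) + 1 * real k"
        unfolding u_def using th by (simp add: field_simps)
      have "exp (\<theta> * (u k - 3 * s)) = exp (\<theta> * (a - 3 * s)) * exp (1 * real k)"
        unfolding e by (rule exp_add)
      thus ?thesis unfolding cB_def by (simp only: mult.assoc)
    qed
    have "\<bar>FF d r (u k) - FF d r s\<bar> \<le> g k" unfolding g_def using P t1 t2 t3 by linarith
    thus ?thesis using w_nonneg[OF mu, of k] by (simp add: abs_mult mult_left_mono)
  qed
  have gs: "(\<lambda>k. w \<mu> k * g k) sums V"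
  proof -
    have "(\<lambda>k. c1 * (w \<mu> k * (real k - \<mu>)^2) + c2 * w \<mu> k + w \<mu> k * (cA * exp((-2) * real k))
        + w \<mu> k * (cB * exp(1 * real k))) sums (c1 * \<mu> + c2 * 1 + cA * exp(-\<mu>) * exp(\<mu> * exp(-2))
        + cB * exp(-\<mu>) * exp(\<mu> * exp 1))"
      by (intro sums_add sums_mult Wvar W0 Wexp)
    thus ?thesis unfolding g_def V_def by (simp add: algebra_simps)
  qed
  define h where "h = (\<lambda>k. w \<mu> k * (FF d r (u k) - FF d r s))"
  have sabs: "summable (\<lambda>k. \<bar>h k\<bar>)"
    by (rule summable_comparison_test'[OF sums_summable[OF gs], of 0]) (use pt in \<open>simp add: h_def\<close>)
  have sh: "summable h" using sabs by (rule summable_rabs_cancel)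
  have "(\<lambda>k. h k + w \<mu> k * FF d r s) sums (suminf h + 1 * FF d r s)"
    by (intro sums_add summable_sums sh sums_mult2 W0)
  moreover have "(\<lambda>k. h k + w \<mu> k * FF d r s) = (\<lambda>k. w \<mu> k * FF d r (a + real k / \<theta>))"
    unfolding h_def u_def by (simp add: algebra_simps)
  ultimately have psi: "(\<Sum>k. w (\<theta> * t) k * FF d r (a + real k / \<theta>)) = suminf h + FF d r s"
    unfolding \<mu>_def by (simp add: sums_iff)
  have "\<bar>suminf h\<bar> \<le> (\<Sum>k. \<bar>h k\<bar>)" by (rule summable_rabs[OF sabs])
  also have "\<dots> \<le> (\<Sum>k. w \<mu> k * g k)"
    by (rule suminf_le) (use pt sabs gs in \<open>auto simp: h_def sums_iff\<close>)
  also have "\<dots> = V" using gs by (simp add: sums_iff)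
  finally have hV: "\<bar>suminf h\<bar> \<le> V" .
  define E where "E = exp(- a * \<theta> / 2)"
  have V1: "c1 * \<mu> + c2 \<le> K1 d / sqrt (a * \<theta>) * F6"
  proof -
    have "c1 * \<mu> + c2 = K1 d * F6 / (s * \<theta>) * (\<mu> / \<delta> + \<delta>) / 2"
      unfolding c1_def c2_def using dpos th s by (simp add: field_simps)
    also have "\<dots> \<le> K1 d * F6 / (s * \<theta>) * (\<delta> + \<delta>) / 2"
    proof -
      have "\<mu> / \<delta> \<le> \<delta>" using dpos dsq ths th a by (simp add: field_simps power2_eq_square) 
      thus ?thesis using K1 F6 s th by (intro divide_right_mono mult_left_mono) auto
    qed
    also have "\<dots> = K1 d * F6 / \<delta>"
    proof -
      have sd: "s * \<theta> = \<delta> * \<delta>" using dsq by (simp add: power2_eq_square mult.commute)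
      show ?thesis unfolding sd using dpos by (simp add: field_simps)
    qed
    also have "\<dots> \<le> K1 d * F6 / sqrt (a * \<theta>)"
    proof (rule divide_left_mono)
      show "sqrt (a * \<theta>) \<le> \<delta>" unfolding \<delta>_def using s th by (simp add: mult.commute mult_left_mono)
    qed (use K1 F6 a th dpos in auto)
    finally show ?thesis by simp
  qed
  have V2: "cA * exp(-\<mu>) * exp(\<mu> * exp(-2)) \<le> c0 powr (-d/2) * (10 * d) powr d * (s powr (-d/2) * E)"
  proof -
    have ex: "2 * \<theta> * (s/10 - a) - \<mu> + \<mu> * exp(-2) \<le> - a * \<theta> / 2 - \<theta> * s / 10"
    proof -
      have "\<mu> * exp(-2) \<le> \<mu> * (1/5)" using exp_m2 mu by (rule mult_left_mono)
      moreover have "0 \<le> \<theta> * a" using th a by simp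
      ultimately have "(\<theta> * s) / 5 - 2 * (\<theta> * a) - \<mu> + \<mu> * exp(-2) \<le> - (\<theta> * a) / 2 - (\<theta> * s) / 10"
        using ths mu by (intro lin1) auto
      moreover have "2 * \<theta> * (s/10 - a) - \<mu> + \<mu> * exp(-2) = (\<theta> * s) / 5 - 2 * (\<theta> * a) - \<mu> + \<mu> * exp(-2)"
        by (simp add: algebra_simps)
      ultimately show ?thesis by (simp add: mult.commute[of a \<theta>])
    qed
    have "cA * exp(-\<mu>) * exp(\<mu> * exp(-2)) = A * exp(2 * \<theta> * (s/10 - a) - \<mu> + \<mu> * exp(-2))"
      unfolding cA_def diff_conv_add_uminus exp_add by (simp only: mult.assoc)
    also have "\<dots> \<le> A * exp(- a * \<theta> / 2 - \<theta> * s / 10)"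
      using ex A0 by (intro mult_left_mono) auto
    also have "\<dots> = A * exp(-(\<theta> * s)/10) * E"
    proof -
      have e: "- a * \<theta> / 2 - \<theta> * s / 10 = -(\<theta> * s)/10 + (- a * \<theta> / 2)" by (simp add: algebra_simps)
      show ?thesis unfolding E_def e exp_add by (simp only: mult.assoc)
    qed
    also have "\<dots> \<le> a powr (-d/2) * exp(-(\<theta> * s)/10) * E"
    proof -
      have "A \<le> a powr (-d/2)" unfolding A_def using a d pi_gt3 by (intro powr_mono2') auto
      thus ?thesis unfolding E_def by (intro mult_right_mono) auto
    qed
    finally have c1: "cA * exp(-\<mu>) * exp(\<mu> * exp(-2)) \<le> a powr (-d/2) * exp(-(\<theta> * s)/10) * E" .
    have c2: "a powr (-d/2) = s powr (-d/2) * (s / a) powr (d/2)"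
      using a s by (simp add: powr_divide powr_minus field_simps)
    have c3a: "(s / a) powr (d/2) \<le> (\<theta> * s / c0) powr (d/2)"
    proof (rule powr_mono2)
      have "s / a = (\<theta> * s) / (\<theta> * a)" using th by simp
      also have "\<dots> \<le> (\<theta> * s) / c0" using th s c0 ac by (intro divide_left_mono) auto
      finally show "s / a \<le> \<theta> * s / c0" .
    qed (use d a s in auto)
    have c3b: "(\<theta> * s / c0) powr (d/2) = c0 powr (-d/2) * (\<theta> * s) powr (d/2)"
      using c0 th s by (simp add: powr_divide powr_minus field_simps)
    have c4: "(\<theta> * s) powr (d/2) * exp(-(\<theta> * s)/10) \<le> (10 * d) powr d"
      by (rule L5) (use th s d in auto)
    have "a powr (-d/2) * exp(-(\<theta> * s)/10) = s powr (-d/2) * ((s / a) powr (d/2) * exp(-(\<theta> * s)/10))"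
      unfolding c2 by (simp only: mult.assoc)
    also have "\<dots> \<le> s powr (-d/2) * (c0 powr (-d/2) * (\<theta> * s) powr (d/2) * exp(-(\<theta> * s)/10))"
      by (rule mult_left_mono[OF mult_right_mono[OF c3a[unfolded c3b]]]) auto
    also have "\<dots> = s powr (-d/2) * c0 powr (-d/2) * ((\<theta> * s) powr (d/2) * exp(-(\<theta> * s)/10))"
      by (simp only: mult.assoc)
    also have "\<dots> \<le> s powr (-d/2) * c0 powr (-d/2) * (10 * d) powr d"
      by (rule mult_left_mono[OF c4]) simp
    finally have c5: "a powr (-d/2) * exp(-(\<theta> * s)/10) \<le> s powr (-d/2) * c0 powr (-d/2) * (10 * d) powr d" .
    have "a powr (-d/2) * exp(-(\<theta> * s)/10) * E \<le> s powr (-d/2) * c0 powr (-d/2) * (10 * d) powr d * E"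
      by (rule mult_right_mono[OF c5]) (simp add: E_def)
    moreover have "s powr (-d/2) * c0 powr (-d/2) * (10 * d) powr d * E = c0 powr (-d/2) * (10 * d) powr d * (s powr (-d/2) * E)"
      by (simp only: mult_ac)
    ultimately show ?thesis using c1 by linarith
  qed
  have V3: "cB * exp(-\<mu>) * exp(\<mu> * exp 1) \<le> s powr (-d/2) * E"
  proof -
    have ex: "\<theta> * (a - 3 * s) - \<mu> + \<mu> * exp 1 \<le> - a * \<theta> / 2"
    proof -
      have "\<mu> * exp 1 \<le> \<mu> * 3" using exp_le mu by (rule mult_left_mono)
      moreover have "\<mu> \<le> \<theta> * s" using ths th a by simp
      moreover have "0 \<le> \<theta> * a" using th a by simp
      ultimately have "(\<theta> * a) - 3 * (\<theta> * s) - \<mu> + \<mu> * exp 1 \<le> - (\<theta> * a) / 2"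
        using ths mu by (intro lin2) auto
      moreover have "\<theta> * (a - 3 * s) - \<mu> + \<mu> * exp 1 = (\<theta> * a) - 3 * (\<theta> * s) - \<mu> + \<mu> * exp 1"
        by (simp add: algebra_simps)
      ultimately show ?thesis by (simp add: mult.commute[of a \<theta>])
    qed
    have "cB * exp(-\<mu>) * exp(\<mu> * exp 1) = B * exp(\<theta> * (a - 3 * s) - \<mu> + \<mu> * exp 1)"
      unfolding cB_def diff_conv_add_uminus exp_add by (simp only: mult.assoc)
    also have "\<dots> \<le> B * E" unfolding E_def using ex A0 by (intro mult_left_mono) auto
    also have "\<dots> \<le> s powr (-d/2) * E"
    proof -
      have "B \<le> s powr (-d/2)" unfolding B_def using s d
        using pi_gt3 by (intro powr_mono2') auto
      thus ?thesis unfolding E_def by (intro mult_right_mono) auto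
    qed
    finally show ?thesis .
  qed
  have CC1: "K1 d \<le> CC d c0" "c0 powr (-d/2) * (10 * d) powr d + 1 \<le> CC d c0"
    unfolding CC_def using K1 by auto
  have "\<bar>(\<Sum>k. w (\<theta> * t) k * FF d r (a + real k / \<theta>)) - FF d r (a + t)\<bar> = \<bar>suminf h\<bar>"
    using psi unfolding s_def by simp
  also have "\<dots> \<le> V" by (rule hV)
  also have "\<dots> \<le> K1 d / sqrt (a * \<theta>) * F6 + (c0 powr (-d/2) * (10 * d) powr d * (s powr (-d/2) * E) + s powr (-d/2) * E)"
    unfolding V_def using V1 V2 V3 by linarith
  also have "\<dots> \<le> CC d c0 / sqrt (a * \<theta>) * F6 + CC d c0 * (s powr (-d/2) * E)"
  proof -
    have q1: "K1 d / sqrt (a * \<theta>) * F6 \<le> CC d c0 / sqrt (a * \<theta>) * F6"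
      by (rule mult_right_mono[OF divide_right_mono[OF CC1(1)]]) (use F6 a th in auto)
    have sE: "0 \<le> s powr (-d/2) * E" unfolding E_def by simp
    have q2: "(c0 powr (-d/2) * (10 * d) powr d + 1) * (s powr (-d/2) * E) \<le> CC d c0 * (s powr (-d/2) * E)"
      by (rule mult_right_mono[OF CC1(2) sE])
    have q3: "(c0 powr (-d/2) * (10 * d) powr d + 1) * (s powr (-d/2) * E) = c0 powr (-d/2) * (10 * d) powr d * (s powr (-d/2) * E) + s powr (-d/2) * E"
      by (simp only: distrib_right mult_1_left)
    show ?thesis using q1 q2 q3 by linarith
  qed
  also have "\<dots> = CC d c0 / sqrt (a * \<theta>) * FF d r (6 * (a + t)) + CC d c0 / (a + t) powr (d/2) * exp(- a * \<theta> / 2)"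
  proof -
    have "s powr (-d/2) = 1 / s powr (d/2)" using powr_minus_divide[of s "d/2"] by simp
    thus ?thesis unfolding F6_def E_def s_def by simp
  qed
  finally show ?thesis .
qed


lemma card_ge1: "real CARD('n::finite) \<ge> 1"
proof -
  have "CARD('n) > 0" by simp
  thus ?thesis by linarith
qed

theorem mainTheorem19:
  fixes c0 :: real
  assumes "c0 > 0"
  shows "\<exists>C::real. \<forall>(\<epsilon>::real) (\<theta>::real) (t::real) (x::real^'n) (y::real^'n).
           \<epsilon> > 0 \<longrightarrow> \<theta> > 0 \<longrightarrow> \<theta> * \<epsilon>\<^sup>2 \<ge> c0 \<longrightarrow> t \<ge> 0 \<longrightarrow>
           \<bar>psi \<theta> \<epsilon> x t y - heat_kernel (\<epsilon>\<^sup>2 + t) x y\<bar>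
             \<le> C / sqrt (\<epsilon>\<^sup>2 * \<theta>) * heat_kernel (6 * (\<epsilon>\<^sup>2 + t)) x y
               + C / (\<epsilon>\<^sup>2 + t) powr (real CARD('n) / 2) * exp (- \<epsilon>\<^sup>2 * \<theta> / 2)"
proof (intro exI allI impI)
  fix \<epsilon> \<theta> t :: real and x y :: "real^'n"
  assume e: "\<epsilon> > 0" and th: "\<theta> > 0" and ac: "\<theta> * \<epsilon>\<^sup>2 \<ge> c0" and t: "t \<ge> 0"
  define d where "d = real CARD('n)"
  define r where "r = (norm (x - y))\<^sup>2"
  have hk: "\<And>T. heat_kernel T x y = FF d r T"
    unfolding heat_kernel_def FF_def d_def r_def by simp
  have ps: "psi \<theta> \<epsilon> x t y = (\<Sum>k. w (\<theta> * t) k * FF d r (\<epsilon>\<^sup>2 + real k / \<theta>))"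
    unfolding psi_def hk w_def by simp
  have "\<bar>(\<Sum>k. w (\<theta> * t) k * FF d r (\<epsilon>\<^sup>2 + real k / \<theta>)) - FF d r (\<epsilon>\<^sup>2 + t)\<bar>
    \<le> CC d c0 / sqrt (\<epsilon>\<^sup>2 * \<theta>) * FF d r (6 * (\<epsilon>\<^sup>2 + t)) + CC d c0 / (\<epsilon>\<^sup>2 + t) powr (d/2) * exp(- \<epsilon>\<^sup>2 * \<theta> / 2)"
    by (rule main_abs) (use card_ge1[where 'n='n] e th ac t assms in \<open>auto simp: d_def r_def\<close>)
  thus "\<bar>psi \<theta> \<epsilon> x t y - heat_kernel (\<epsilon>\<^sup>2 + t) x y\<bar>
             \<le> CC (real CARD('n)) c0 / sqrt (\<epsilon>\<^sup>2 * \<theta>) * heat_kernel (6 * (\<epsilon>\<^sup>2 + t)) x y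
               + CC (real CARD('n)) c0 / (\<epsilon>\<^sup>2 + t) powr (real CARD('n) / 2) * exp (- \<epsilon>\<^sup>2 * \<theta> / 2)"
    unfolding ps hk d_def .
qed

end
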